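(* Consider a signal–idler system of one bosonic signal mode $S$ and one bosonic idler mode $I$, with quadrature vector ${\bf R}=(q_S,p_S,q_I,p_I)^\top$, commutation relations $[R_i,R_j]=\mathrm{i}\Omega_{ij}$ with ${\bf \Omega}=\mathbb{I}_2\otimes(\mathrm{i}\sigma_y)$, covariance matrix $\Sigma_{ij}=\frac12\langle R_iR_j+R_jR_i\rangle-\langle R_i\rangle\langle R_j\rangle$ and first-moment vector $d_i=\langle R_i\rangle$. The signal is sent through the thermal lossy channel, which maps ${\bf d}=[{\bf d}_S^\top,{\bf d}_I^\top]^\top\mapsto[\eta{\bf d}_S^\top,{\bf d}_I^\top]^\top$ and ${\bf \Sigma}=\begin{bmatrix}{\bf \Sigma}_S & {\bf \Sigma}_{SI}\\ {\bf \Sigma}_{SI}^\top & {\bf \Sigma}_I\end{bmatrix}\mapsto\begin{bmatrix}\eta^2{\bf \Sigma}_S+y(\eta)\mathbb{I}_2 & \eta{\bf \Sigma}_{SI}\\ \eta{\bf \Sigma}_{SI}^\top & {\bf \Sigma}_I\end{bmatrix}$, with $y(\eta)=(1-\eta^2)(N_B+\frac12)$. Then, for the purpose of estimating $\eta$, the covariance matrix and first-moment vector of a generic input state of this channel (with a single-mode idler) can be canonically expressed as \begin{align*} {\bf d}=\begin{bmatrix} q \\ p \\ 0\\0\end{bmatrix},\quad {\bf \Sigma}=\begin{bmatrix} a{\bf S}(r) & {\bf R}(\phi){\bf C}\\ [{\bf R}(\phi){\bf C}]^\top & b\mathbb{I}_2\end{bmatrix}, \end{align*} where ${\bf S}(r)={\rm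 diag}(r,r^{-1})$, ${\bf R}(\phi)=\begin{bmatrix}\cos\phi & -\sin\phi\\ \sin\phi & \cos\phi\end{bmatrix}$, ${\bf C}={\rm diag}(c_+,c_-)$. Here all parameters are real and respect the constraints given by the Heisenberg relation ${\bf \Sigma}+\mathrm{i}{\bf \Omega}/2\succeq0$.
   Context: The reduction is without loss of generality because the channel commutes with any rotation applied to the signal and any symplectic (Gaussian unitary) transformation applied to the idler, so these can be applied to the input without changing the information about $\eta$. $N_B\geq0$ is the mean thermal photon number of the bath and $\eta$ is the lossy transmission parameter. *)

theory Defs
  imports Complex_Main "Jordan_Normal_Form.Matrix"
begin

text \<open>Two-mode (signal S = indices 0,1; idler I = indices 2,3) Gaussian data.
  Quadrature ordering R = (q_S, p_S, q_I, p_I).\<close>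

definition Jmat :: "real mat" where
  "Jmat = mat_of_rows_list 2 [[0, 1], [-1, 0]]"

definition Omega :: "real mat" where
  "Omega = four_block_mat Jmat (0\<^sub>m 2 2) (0\<^sub>m 2 2) Jmat"

text \<open>Heisenberg (uncertainty) relation  Sigma + i Omega / 2 \<succeq> 0 (positive semidefinite
  Hermitian matrix: the quadratic form is real and nonnegative).\<close>
definition heisenberg :: "real mat \<Rightarrow> bool" where
  "heisenberg \<Sigma> \<longleftrightarrow> (\<forall>z :: nat \<Rightarrow> complex.
     (let s = (\<Sum>i<4. \<Sum>j<4. cnj (z i) *
                 (complex_of_real (\<Sigma> $$ (i, j)) + \<i> * complex_of_real (Omega $$ (i, j)) / 2) * z j)
      in Im s = 0 \<and> 0 \<le> Re s))"

definition rotm :: "real \<Rightarrow> real mat" where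
  "rotm \<phi> = mat_of_rows_list 2 [[cos \<phi>, - sin \<phi>], [sin \<phi>, cos \<phi>]]"

definition sqzm :: "real \<Rightarrow> real mat" where
  "sqzm r = mat_of_rows_list 2 [[r, 0], [0, inverse r]]"

definition diag2 :: "real \<Rightarrow> real \<Rightarrow> real mat" where
  "diag2 x y = mat_of_rows_list 2 [[x, 0], [0, y]]"

definition ychan :: "real \<Rightarrow> real \<Rightarrow> real" where
  "ychan NB \<eta> = (1 - \<eta>\<^sup>2) * (NB + 1/2)"

definition chan_d :: "real \<Rightarrow> real vec \<Rightarrow> real vec" where
  "chan_d \<eta> d = vec 4 (\<lambda>i. (if i < 2 then \<eta> else 1) * d $ i)"

definition chan_cov :: "real \<Rightarrow> real \<Rightarrow> real mat \<Rightarrow> real mat" where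
  "chan_cov NB \<eta> \<Sigma> = mat 4 4 (\<lambda>(i, j).
      (if i < 2 then \<eta> else 1) * (if j < 2 then \<eta> else 1) * \<Sigma> $$ (i, j)
      + (if i = j \<and> i < 2 then ychan NB \<eta> else 0))"

text \<open>Single-mode symplectic matrix (Gaussian unitary on the idler, linear part).\<close>
definition symplectic2 :: "real mat \<Rightarrow> bool" where
  "symplectic2 M \<longleftrightarrow> M \<in> carrier_mat 2 2 \<and> M * Jmat * M\<^sup>T = Jmat"

definition locop :: "real \<Rightarrow> real mat \<Rightarrow> real mat" where
  "locop \<theta> M = four_block_mat (rotm \<theta>) (0\<^sub>m 2 2) (0\<^sub>m 2 2) M"

definition idler_disp :: "real \<Rightarrow> real \<Rightarrow> real vec" where
  "idler_disp w1 w2 = vec_of_list [0, 0, w1, w2]"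

definition canon_d :: "real \<Rightarrow> real \<Rightarrow> real vec" where
  "canon_d q p = vec_of_list [q, p, 0, 0]"

definition canon_cov :: "real \<Rightarrow> real \<Rightarrow> real \<Rightarrow> real \<Rightarrow> real \<Rightarrow> real \<Rightarrow> real mat" where
  "canon_cov a r \<phi> cp cm b =
     four_block_mat (a \<cdot>\<^sub>m sqzm r) (rotm \<phi> * diag2 cp cm)
                    ((rotm \<phi> * diag2 cp cm)\<^sup>T) (b \<cdot>\<^sub>m 1\<^sub>m 2)"

end

theory Submission
  imports Defs
begin
lemma Jmat_dim[simp]: "dim_row Jmat = 2" "dim_col Jmat = 2" unfolding Jmat_def mat_of_rows_list_def by simp_all
lemma Omega_carrier: "Omega \<in> carrier_mat 4 4" unfolding Omega_def carrier_mat_def by simp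
lemma rotm_dim[simp]: "dim_row (rotm t) = 2" "dim_col (rotm t) = 2"
  unfolding rotm_def mat_of_rows_list_def by simp_all
lemma sum4: "(\<Sum>i\<in>{0..<4::nat}. f i) = f 0 + f 1 + f 2 + (f 3::'a::comm_monoid_add)"
proof -
  have "{0..<4::nat} = {0,1,2,3}" by auto
  then show ?thesis by (simp add: ac_simps)
qed
lemma sum2: "(\<Sum>i\<in>{0..<2::nat}. f i) = f 0 + (f 1::'a::comm_monoid_add)"
proof -
  have "{0..<2::nat} = {0,1}" by auto
  then show ?thesis by (simp add: ac_simps)
qed
lemma mult4: assumes "A \<in> carrier_mat 4 4" "B \<in> carrier_mat 4 4" "i < 4" "j < 4"
  shows "(A * B) $$ (i,j) = A$$(i,0)*B$$(0,j) + A$$(i,1)*B$$(1,j) + A$$(i,2)*B$$(2,j) + A$$(i,3)*B$$(3,j)"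
  using assms by (simp add: scalar_prod_def sum4)
lemma mult2: assumes "A \<in> carrier_mat 2 2" "B \<in> carrier_mat 2 2" "i < 2" "j < 2"
  shows "(A * B) $$ (i,j) = A$$(i,0)*B$$(0,j) + A$$(i,1)*B$$(1,j)"
  using assms by (simp add: scalar_prod_def sum2)

lemma swap4: "(\<Sum>i\<in>A. \<Sum>j\<in>B. \<Sum>k\<in>C. \<Sum>l\<in>D. (f i j k l :: complex)) = (\<Sum>k\<in>C. \<Sum>l\<in>D. \<Sum>i\<in>A. \<Sum>j\<in>B. f i j k l)"
proof -
  have "(\<Sum>i\<in>A. \<Sum>j\<in>B. \<Sum>k\<in>C. \<Sum>l\<in>D. f i j k l) = (\<Sum>i\<in>A. \<Sum>k\<in>C. \<Sum>j\<in>B. \<Sum>l\<in>D. f i j k l)"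
    by (rule sum.cong[OF refl], rule sum.swap)
  also have "\<dots> = (\<Sum>i\<in>A. \<Sum>k\<in>C. \<Sum>l\<in>D. \<Sum>j\<in>B. f i j k l)"
    by (rule sum.cong[OF refl], rule sum.cong[OF refl], rule sum.swap)
  also have "\<dots> = (\<Sum>k\<in>C. \<Sum>i\<in>A. \<Sum>l\<in>D. \<Sum>j\<in>B. f i j k l)"
    by (rule sum.swap)
  also have "\<dots> = (\<Sum>k\<in>C. \<Sum>l\<in>D. \<Sum>i\<in>A. \<Sum>j\<in>B. f i j k l)"
    by (rule sum.cong[OF refl], rule sum.swap)
  finally show ?thesis .
qed

lemma cong_entry: assumes "L \<in> carrier_mat 4 4" "X \<in> carrier_mat 4 4" "i < 4" "j < 4"
  shows "(L * X * L\<^sup>T) $$ (i,j) = (\<Sum>k<4. \<Sum>l<4. L $$ (i,k) * X $$ (k,l) * L $$ (j,l))"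
proof -
  have "(L * X * L\<^sup>T) $$ (i,j) = (\<Sum>k<4. L $$ (i, k) * (\<Sum>l<4. X $$ (k, l) * L $$ (j, l)))"
    using assms by (simp add: scalar_prod_def atLeast0LessThan)
  also have "\<dots> = (\<Sum>k<4. \<Sum>l<4. L $$ (i,k) * X $$ (k,l) * L $$ (j,l))"
    by (simp add: sum_distrib_left mult.assoc)
  finally show ?thesis .
qed

definition hform :: "real mat \<Rightarrow> (nat \<Rightarrow> complex) \<Rightarrow> complex" where
  "hform X z = (\<Sum>i<4. \<Sum>j<4. cnj (z i) *
                 (complex_of_real (X $$ (i, j)) + \<i> * complex_of_real (Omega $$ (i, j)) / 2) * z j)"

lemma heisenberg_hform: "heisenberg X \<longleftrightarrow> (\<forall>z. Im (hform X z) = 0 \<and> 0 \<le> Re (hform X z))"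
  unfolding heisenberg_def hform_def Let_def by (rule refl)

lemma dist2: "(x::complex) * (\<Sum>k\<in>A. \<Sum>l\<in>B. f k l) * y = (\<Sum>k\<in>A. \<Sum>l\<in>B. x * f k l * y)"
  by (simp add: sum_distrib_left sum_distrib_right)
lemma dist3: "(\<Sum>i\<in>A. u i) * (h::complex) * (\<Sum>j\<in>B. v j) = (\<Sum>i\<in>A. \<Sum>j\<in>B. u i * h * v j)"
  by (simp add: sum_distrib_left sum_distrib_right) (rule sum.swap)
lemma splitH: "(\<Sum>k\<in>A. \<Sum>l\<in>B. complex_of_real (a k l) + \<i> * complex_of_real (b k l) / 2)
   = complex_of_real (\<Sum>k\<in>A. \<Sum>l\<in>B. a k l) + \<i> * complex_of_real (\<Sum>k\<in>A. \<Sum>l\<in>B. b k l) / 2"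
  by (simp add: sum.distrib sum_distrib_left sum_divide_distrib)

lemma hform_cong: assumes "L \<in> carrier_mat 4 4" "X \<in> carrier_mat 4 4" "L * Omega * L\<^sup>T = Omega"
  shows "hform (L * X * L\<^sup>T) z = hform X (\<lambda>l. \<Sum>i<4. complex_of_real (L $$ (i,l)) * z i)"
proof -
  have Oc: "Omega \<in> carrier_mat 4 4" by (rule Omega_carrier)
  let ?H = "\<lambda>k l. complex_of_real (X $$ (k, l)) + \<i> * complex_of_real (Omega $$ (k, l)) / 2"
  have e: "complex_of_real ((L * X * L\<^sup>T) $$ (i, j)) + \<i> * complex_of_real (Omega $$ (i, j)) / 2
     = (\<Sum>k<4. \<Sum>l<4. complex_of_real (L $$ (i,k)) * ?H k l * complex_of_real (L $$ (j,l)))"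
    if "i < 4" "j < 4" for i j
  proof -
    have "(L * Omega * L\<^sup>T) $$ (i,j) = (\<Sum>k<4. \<Sum>l<4. L $$ (i,k) * Omega $$ (k,l) * L $$ (j,l))"
      by (rule cong_entry[OF assms(1) Oc that])
    then have o: "Omega $$ (i,j) = (\<Sum>k<4. \<Sum>l<4. L $$ (i,k) * Omega $$ (k,l) * L $$ (j,l))"
      unfolding assms(3) .
    have "(\<Sum>k<4. \<Sum>l<4. complex_of_real (L $$ (i,k)) * ?H k l * complex_of_real (L $$ (j,l)))
      = (\<Sum>k<4. \<Sum>l<4. complex_of_real (L $$ (i,k) * X $$ (k,l) * L $$ (j,l)) + \<i> * complex_of_real (L $$ (i,k) * Omega $$ (k,l) * L $$ (j,l)) / 2)"
      by (intro sum.cong refl) (simp add: algebra_simps)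
    also have "\<dots> = complex_of_real (\<Sum>k<4. \<Sum>l<4. L $$ (i,k) * X $$ (k,l) * L $$ (j,l)) + \<i> * complex_of_real (\<Sum>k<4. \<Sum>l<4. L $$ (i,k) * Omega $$ (k,l) * L $$ (j,l)) / 2"
      by (rule splitH)
    also have "\<dots> = complex_of_real ((L * X * L\<^sup>T) $$ (i, j)) + \<i> * complex_of_real (Omega $$ (i, j)) / 2"
      by (simp only: cong_entry[OF assms(1,2) that] o[symmetric])
    finally show ?thesis by (rule sym)
  qed
  have "hform (L * X * L\<^sup>T) z = (\<Sum>i<4. \<Sum>j<4. cnj (z i) *
      (\<Sum>k<4. \<Sum>l<4. complex_of_real (L $$ (i,k)) * ?H k l * complex_of_real (L $$ (j,l))) * z j)"
    unfolding hform_def by (intro sum.cong refl) (simp only: e lessThan_iff)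
  also have "\<dots> = (\<Sum>i<4. \<Sum>j<4. \<Sum>k<4. \<Sum>l<4. (cnj (z i) * complex_of_real (L $$ (i,k))) * ?H k l * (complex_of_real (L $$ (j,l)) * z j))"
    unfolding dist2 by (intro sum.cong refl) (simp only: mult.assoc)
  also have "\<dots> = (\<Sum>k<4. \<Sum>l<4. \<Sum>i<4. \<Sum>j<4. (cnj (z i) * complex_of_real (L $$ (i,k))) * ?H k l * (complex_of_real (L $$ (j,l)) * z j))"
    by (rule swap4)
  also have "\<dots> = (\<Sum>k<4. \<Sum>l<4. (\<Sum>i<4. cnj (z i) * complex_of_real (L $$ (i,k))) * ?H k l * (\<Sum>j<4. complex_of_real (L $$ (j,l)) * z j))"
    unfolding dist3 ..
  also have "\<dots> = hform X (\<lambda>l. \<Sum>i<4. complex_of_real (L $$ (i,l)) * z i)"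
    unfolding hform_def by (intro sum.cong refl) (simp add: cnj_sum mult.commute)
  finally show ?thesis .
qed


lemma heis_pres: assumes "L \<in> carrier_mat 4 4" "X \<in> carrier_mat 4 4" "L * Omega * L\<^sup>T = Omega"
  "heisenberg X" shows "heisenberg (L * X * L\<^sup>T)"
  using assms unfolding heisenberg_hform hform_cong[OF assms(1-3)] by blast

lemma sum4': "(\<Sum>i<4::nat. f i) = f 0 + f 1 + f 2 + (f 3::'a::comm_monoid_add)"
  using sum4[of f] by (simp add: atLeast0LessThan)
lemma sum2': "(\<Sum>i<2::nat. f i) = f 0 + (f 1::'a::comm_monoid_add)"
  using sum2[of f] by (simp add: atLeast0LessThan)

lemma rotm_idx[simp]: "rotm t $$ (0,0) = cos t" "rotm t $$ (0,Suc 0) = - sin t" "rotm t $$ (Suc 0,0) = sin t" "rotm t $$ (Suc 0,Suc 0) = cos t"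
  by (auto simp: rotm_def mat_of_rows_list_def)
lemma rotm_carrier[simp]: "rotm t \<in> carrier_mat 2 2" unfolding carrier_mat_def by simp
lemma Jmat_idx[simp]: "Jmat $$ (0,0) = 0" "Jmat $$ (0,Suc 0) = 1" "Jmat $$ (Suc 0,0) = -1" "Jmat $$ (Suc 0,Suc 0) = 0"
  by (auto simp: Jmat_def mat_of_rows_list_def)
lemma Jmat_carrier[simp]: "Jmat \<in> carrier_mat 2 2" unfolding carrier_mat_def by simp

lemma locop_carrier[simp]: "M \<in> carrier_mat 2 2 \<Longrightarrow> locop t M \<in> carrier_mat 4 4"
  unfolding locop_def carrier_mat_def by auto

lemma locop_idx: assumes "M \<in> carrier_mat 2 2"
  shows "locop t M $$ (0,0) = cos t" "locop t M $$ (0,Suc 0) = - sin t" "locop t M $$ (Suc 0,0) = sin t" "locop t M $$ (Suc 0,Suc 0) = cos t"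
   "locop t M $$ (0,2) = 0" "locop t M $$ (0,3) = 0" "locop t M $$ (Suc 0,2) = 0" "locop t M $$ (Suc 0,3) = 0"
   "locop t M $$ (2,0) = 0" "locop t M $$ (2,Suc 0) = 0" "locop t M $$ (3,0) = 0" "locop t M $$ (3,Suc 0) = 0"
   "locop t M $$ (2,2) = M $$ (0,0)" "locop t M $$ (2,3) = M $$ (0,Suc 0)" "locop t M $$ (3,2) = M $$ (Suc 0,0)" "locop t M $$ (3,3) = M $$ (Suc 0,Suc 0)"
proof -
  have d: "dim_row M = 2" "dim_col M = 2" using assms by auto
  show "locop t M $$ (0,0) = cos t" "locop t M $$ (0,Suc 0) = - sin t" "locop t M $$ (Suc 0,0) = sin t" "locop t M $$ (Suc 0,Suc 0) = cos t"
   "locop t M $$ (0,2) = 0" "locop t M $$ (0,3) = 0" "locop t M $$ (Suc 0,2) = 0" "locop t M $$ (Suc 0,3) = 0"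
   "locop t M $$ (2,0) = 0" "locop t M $$ (2,Suc 0) = 0" "locop t M $$ (3,0) = 0" "locop t M $$ (3,Suc 0) = 0"
   "locop t M $$ (2,2) = M $$ (0,0)" "locop t M $$ (2,3) = M $$ (0,Suc 0)" "locop t M $$ (3,2) = M $$ (Suc 0,0)" "locop t M $$ (3,3) = M $$ (Suc 0,Suc 0)"
    by (auto simp: d locop_def)
qed

lemma Omega_idx: "Omega $$ (0,0) = 0" "Omega $$ (0,Suc 0) = 1" "Omega $$ (0,2) = 0" "Omega $$ (0,3) = 0"
  "Omega $$ (Suc 0,0) = -1" "Omega $$ (Suc 0,Suc 0) = 0" "Omega $$ (Suc 0,2) = 0" "Omega $$ (Suc 0,3) = 0"
  "Omega $$ (2,0) = 0" "Omega $$ (2,Suc 0) = 0" "Omega $$ (2,2) = 0" "Omega $$ (2,3) = 1"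
  "Omega $$ (3,0) = 0" "Omega $$ (3,Suc 0) = 0" "Omega $$ (3,2) = -1" "Omega $$ (3,3) = 0"
  by (auto simp: Omega_def)

lemma symp_det: assumes "symplectic2 M" shows "M $$ (0,0) * M $$ (1,1) - M $$ (0,1) * M $$ (1,0) = 1"
proof -
  have c: "M \<in> carrier_mat 2 2" and e: "M * Jmat * M\<^sup>T = Jmat" using assms unfolding symplectic2_def by auto
  have "(M * Jmat * M\<^sup>T) $$ (0,1) = 1" using e by simp
  then show ?thesis using c by (simp add: scalar_prod_def sum2 algebra_simps)
qed


definition blk :: "real mat \<Rightarrow> nat \<Rightarrow> nat \<Rightarrow> real mat" where
  "blk X a b = mat 2 2 (\<lambda>(i,j). X $$ (i+a, j+b))"

lemma blk_carrier[simp]: "blk X a b \<in> carrier_mat 2 2" unfolding blk_def by simp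
lemma blk_dim[simp]: "dim_row (blk X a b) = 2" "dim_col (blk X a b) = 2" unfolding blk_def by simp_all

lemma blk_split: assumes "X \<in> carrier_mat 4 4"
  shows "X = four_block_mat (blk X 0 0) (blk X 0 2) (blk X 2 0) (blk X 2 2)"
  by (rule eq_matI) (use assms in \<open>auto simp: blk_def Suc_diff_Suc numeral_2_eq_2\<close>)


lemma hform_sig: assumes "X \<in> carrier_mat 4 4"
  shows "hform X (\<lambda>i. if i = 0 then u else if i = 1 then v else 0) =
    cnj u * complex_of_real (X $$ (0,0)) * u + cnj u * (complex_of_real (X $$ (0,1)) + \<i>/2) * v
  + cnj v * (complex_of_real (X $$ (1,0)) - \<i>/2) * u + cnj v * complex_of_real (X $$ (1,1)) * v"
  unfolding hform_def sum4' by (simp add: Omega_idx algebra_simps)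

lemma hform_idl: assumes "X \<in> carrier_mat 4 4"
  shows "hform X (\<lambda>i. if i = 2 then u else if i = 3 then v else 0) =
    cnj u * complex_of_real (X $$ (2,2)) * u + cnj u * (complex_of_real (X $$ (2,3)) + \<i>/2) * v
  + cnj v * (complex_of_real (X $$ (3,2)) - \<i>/2) * u + cnj v * complex_of_real (X $$ (3,3)) * v"
  unfolding hform_def sum4' by (simp add: Omega_idx algebra_simps)

lemma t1: fixes a b d t :: real shows "Re (cnj (complex_of_real t) * complex_of_real a * complex_of_real t + cnj (complex_of_real t) * (complex_of_real b + \<i>/2) * \<i>
  + cnj \<i> * (complex_of_real b - \<i>/2) * complex_of_real t + cnj \<i> * complex_of_real d * \<i>) = t\<^sup>2 * a - t + d"
  by (simp add: power2_eq_square)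
lemma t2: fixes a b d :: real shows "Re (cnj (- (complex_of_real b + \<i>/2)) * complex_of_real a * (- (complex_of_real b + \<i>/2)) + cnj (- (complex_of_real b + \<i>/2)) * (complex_of_real b + \<i>/2) * complex_of_real a
  + cnj (complex_of_real a) * (complex_of_real b - \<i>/2) * (- (complex_of_real b + \<i>/2)) + cnj (complex_of_real a) * complex_of_real d * complex_of_real a) = a * (a * d - b\<^sup>2 - 1/4)"
  by (simp add: power2_eq_square algebra_simps)
lemma pd_block:
  fixes a b d :: real
  assumes "\<And>u v. 0 \<le> Re (cnj u * complex_of_real a * u + cnj u * (complex_of_real b + \<i>/2) * v
  + cnj v * (complex_of_real b - \<i>/2) * u + cnj v * complex_of_real d * v)"
  shows "a > 0 \<and> d > 0 \<and> a * d - b\<^sup>2 \<ge> 1/4"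
proof -
  have r1: "0 \<le> t\<^sup>2 * a - t + d" for t
    using assms[of "complex_of_real t" "\<i>"] unfolding t1 .
  have a0: "a \<ge> 0" using assms[of 1 0] by simp
  have "a \<noteq> 0"
  proof
    assume "a = 0" then show False using r1[of "d + 1"] by simp
  qed
  with a0 have ap: "a > 0" by simp
  have "0 \<le> a * (a * d - b\<^sup>2 - 1/4)"
    using assms[of "- (complex_of_real b + \<i>/2)" "complex_of_real a"] unfolding t2 .
  then have det: "a * d - b\<^sup>2 \<ge> 1/4" using ap by (simp add: zero_le_mult_iff)
  moreover have "b\<^sup>2 \<ge> 0" by simp
  ultimately have "a * d > 0" by linarith
  then have "d > 0" using ap by (simp add: zero_less_mult_iff)
  with ap det show ?thesis by simp
qed

lemma heis_blocks: assumes "X \<in> carrier_mat 4 4" "X\<^sup>T = X" "heisenberg X"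
  shows "X $$ (0,0) > 0 \<and> X $$ (1,1) > 0 \<and> X $$ (0,0) * X $$ (1,1) - (X $$ (0,1))\<^sup>2 \<ge> 1/4"
    "X $$ (2,2) > 0 \<and> X $$ (3,3) > 0 \<and> X $$ (2,2) * X $$ (3,3) - (X $$ (2,3))\<^sup>2 \<ge> 1/4"
proof -
  have s10: "X $$ (1,0) = X $$ (0,1)" and s32: "X $$ (3,2) = X $$ (2,3)"
    using assms(1) arg_cong[OF assms(2), of "\<lambda>A. A $$ (0,1)"] arg_cong[OF assms(2), of "\<lambda>A. A $$ (2,3)"] by auto
  have h: "0 \<le> Re (hform X z)" for z using assms(3) unfolding heisenberg_hform by blast
  show "X $$ (0,0) > 0 \<and> X $$ (1,1) > 0 \<and> X $$ (0,0) * X $$ (1,1) - (X $$ (0,1))\<^sup>2 \<ge> 1/4"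
    by (rule pd_block) (use h[of "\<lambda>i. if i = 0 then _ else if i = 1 then _ else 0"] in \<open>simp only: hform_sig[OF assms(1)] s10\<close>)
  show "X $$ (2,2) > 0 \<and> X $$ (3,3) > 0 \<and> X $$ (2,2) * X $$ (3,3) - (X $$ (2,3))\<^sup>2 \<ge> 1/4"
    by (rule pd_block) (use h[of "\<lambda>i. if i = 2 then _ else if i = 3 then _ else 0"] in \<open>simp only: hform_idl[OF assms(1)] s32\<close>)
qed

definition lb :: "real \<Rightarrow> real mat \<Rightarrow> nat \<Rightarrow> nat \<Rightarrow> real" where
  "lb t M i k = (if i < 2 then rotm t $$ (i,k) else M $$ (i-2,k))"
definition kk :: "nat \<Rightarrow> nat \<Rightarrow> nat" where
  "kk i k = (if i < 2 then k else if k = 0 then 2 else 3)"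

lemma locop_entry: assumes "M \<in> carrier_mat 2 2" "X \<in> carrier_mat 4 4" "i < 4" "j < 4"
  shows "(locop t M * X * (locop t M)\<^sup>T) $$ (i,j) = (\<Sum>k<2. \<Sum>l<2. lb t M i k * X $$ (kk i k, kk j l) * lb t M j l)"
proof -
  have "i = 0 \<or> i = Suc 0 \<or> i = 2 \<or> i = 3" "j = 0 \<or> j = Suc 0 \<or> j = 2 \<or> j = 3" using assms(3,4) by auto
  then show ?thesis
    unfolding cong_entry[OF locop_carrier[OF assms(1)] assms(2,3,4)] sum4' sum2'
    by (elim disjE) (simp_all add: locop_idx[OF assms(1)] lb_def kk_def)
qed


lemma Omega_dim[simp]: "dim_row Omega = 4" "dim_col Omega = 4" using Omega_carrier by auto
lemma locop_dim[simp]: "dim_row (locop t M) = 2 + dim_row M" "dim_col (locop t M) = 2 + dim_col M"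
  unfolding locop_def by simp_all

lemma less4': "(i::nat) < 4 \<longleftrightarrow> i = 0 \<or> i = Suc 0 \<or> i = 2 \<or> i = 3" by auto

lemma locop_omega: assumes "M \<in> carrier_mat 2 2" "M $$ (0,0) * M $$ (1,1) - M $$ (0,1) * M $$ (1,0) = 1"
  shows "locop t M * Omega * (locop t M)\<^sup>T = Omega"
proof (rule eq_matI)
  have sc: "cos t * cos t + sin t * sin t = 1" using sin_cos_squared_add[of t] by (simp add: power2_eq_square)
  fix i j assume ij: "i < dim_row Omega" "j < dim_col Omega"
  then have "i = 0 \<or> i = Suc 0 \<or> i = 2 \<or> i = 3" "j = 0 \<or> j = Suc 0 \<or> j = 2 \<or> j = 3" by auto
  then show "(locop t M * Omega * (locop t M)\<^sup>T) $$ (i, j) = Omega $$ (i, j)"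
    unfolding locop_entry[OF assms(1) Omega_carrier ij[simplified]] sum2'
    using assms(2) sc
    by (elim disjE) (simp_all add: lb_def kk_def Omega_idx algebra_simps)
qed (use assms(1) in auto)

lemma symp_of_det: assumes "M \<in> carrier_mat 2 2" "M $$ (0,0) * M $$ (1,1) - M $$ (0,1) * M $$ (1,0) = 1"
  shows "symplectic2 M"
  unfolding symplectic2_def
proof (intro conjI assms(1) eq_matI)
  fix i j assume ij: "i < dim_row Jmat" "j < dim_col Jmat"
  then have "i = 0 \<or> i = Suc 0" "j = 0 \<or> j = Suc 0" by auto
  then show "(M * Jmat * M\<^sup>T) $$ (i, j) = Jmat $$ (i, j)"
    using assms ij by (elim disjE) (simp_all add: scalar_prod_def sum2 algebra_simps)
qed (use assms(1) in auto)

lemma cong_sym: fixes L X :: "real mat" assumes "L \<in> carrier_mat 4 4" "X \<in> carrier_mat 4 4" "X\<^sup>T = X"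
  shows "(L * X * L\<^sup>T)\<^sup>T = L * X * L\<^sup>T"
proof (rule eq_matI)
  fix i j assume ij: "i < dim_row (L * X * L\<^sup>T)" "j < dim_col (L * X * L\<^sup>T)"
  then have ij': "i < 4" "j < 4" using assms by auto
  have xs: "X $$ (l,k) = X $$ (k,l)" if "k < 4" "l < 4" for k l
    using arg_cong[OF assms(3), of "\<lambda>A. A $$ (k,l)"] that assms(2) by auto
  have "(L * X * L\<^sup>T)\<^sup>T $$ (i, j) = (L * X * L\<^sup>T) $$ (j, i)" using ij' assms by simp
  also have "\<dots> = (\<Sum>k<4. \<Sum>l<4. L $$ (j,k) * X $$ (k,l) * L $$ (i,l))"
    by (rule cong_entry[OF assms(1,2) ij'(2,1)])
  also have "\<dots> = (\<Sum>l<4. \<Sum>k<4. L $$ (j,k) * X $$ (k,l) * L $$ (i,l))" by (rule sum.swap)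
  also have "\<dots> = (\<Sum>l<4. \<Sum>k<4. L $$ (i,l) * X $$ (l,k) * L $$ (j,k))"
    by (intro sum.cong refl) (simp add: xs; simp only: mult_ac)
  also have "\<dots> = (L * X * L\<^sup>T) $$ (i, j)"
    by (rule cong_entry[OF assms(1,2) ij', symmetric])
  finally show "(L * X * L\<^sup>T)\<^sup>T $$ (i, j) = (L * X * L\<^sup>T) $$ (i, j)" .
qed (use assms in auto)


lemma idler_disp_idx: "idler_disp w1 w2 $ 0 = 0" "idler_disp w1 w2 $ Suc 0 = 0" "idler_disp w1 w2 $ 2 = w1" "idler_disp w1 w2 $ 3 = w2"
  "dim_vec (idler_disp w1 w2) = 4"
  by (simp_all del: vec_of_list_Cons add: idler_disp_def vec_of_list_index)

lemma canon_d_idx: "canon_d q p $ 0 = q" "canon_d q p $ Suc 0 = p" "canon_d q p $ 2 = 0" "canon_d q p $ 3 = 0"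
  "dim_vec (canon_d q p) = 4"
  by (simp_all del: vec_of_list_Cons add: canon_d_def vec_of_list_index)

lemma mv_entry: assumes "M \<in> carrier_mat 2 2" "v \<in> carrier_vec 4" "i < 4"
  shows "(locop t M *\<^sub>v v) $ i = locop t M $$ (i,0) * v $ 0 + locop t M $$ (i,Suc 0) * v $ Suc 0 + locop t M $$ (i,2) * v $ 2 + locop t M $$ (i,3) * v $ 3"
  using assms by (simp add: scalar_prod_def sum4)

lemma chan_d_idx: "i < 4 \<Longrightarrow> chan_d \<eta> v $ i = (if i < 2 then \<eta> else 1) * v $ i" "dim_vec (chan_d \<eta> v) = 4"
  by (simp_all add: chan_d_def)

lemma chan_d_comm: assumes "M \<in> carrier_mat 2 2" "v \<in> carrier_vec 4"
  shows "chan_d \<eta> (locop t M *\<^sub>v v + idler_disp w1 w2) = locop t M *\<^sub>v chan_d \<eta> v + idler_disp w1 w2"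
proof (rule eq_vecI)
  have cv: "chan_d \<eta> v \<in> carrier_vec 4" by (simp add: chan_d_def)
  fix i assume "i < dim_vec (locop t M *\<^sub>v chan_d \<eta> v + idler_disp w1 w2)"
  then have i4: "i < 4" by (simp add: idler_disp_idx)
  then have "i = 0 \<or> i = Suc 0 \<or> i = 2 \<or> i = 3" by auto
  then show "chan_d \<eta> (locop t M *\<^sub>v v + idler_disp w1 w2) $ i = (locop t M *\<^sub>v chan_d \<eta> v + idler_disp w1 w2) $ i"
    using i4 assms cv
    by (elim disjE) (simp_all add: chan_d_idx idler_disp_idx mv_entry locop_idx algebra_simps del: index_mult_mat_vec)
qed (simp add: chan_d_idx idler_disp_idx)

lemma chan_cov_carrier[simp]: "chan_cov NB \<eta> X \<in> carrier_mat 4 4" by (simp add: chan_cov_def)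
lemma chan_cov_dim[simp]: "dim_row (chan_cov NB \<eta> X) = 4" "dim_col (chan_cov NB \<eta> X) = 4" by (simp_all add: chan_cov_def)
lemma chan_cov_idx: "i < 4 \<Longrightarrow> j < 4 \<Longrightarrow> chan_cov NB \<eta> X $$ (i,j) =
      (if i < 2 then \<eta> else 1) * (if j < 2 then \<eta> else 1) * X $$ (i, j)
      + (if i = j \<and> i < 2 then ychan NB \<eta> else 0)"
  by (simp add: chan_cov_def)

lemma chan_cov_comm: assumes "M \<in> carrier_mat 2 2" "X \<in> carrier_mat 4 4"
  shows "chan_cov NB \<eta> (locop t M * X * (locop t M)\<^sup>T) = locop t M * chan_cov NB \<eta> X * (locop t M)\<^sup>T"
proof (rule eq_matI)
  have sc: "cos t * (cos t * y) + sin t * (sin t * y) = y" for y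
  proof -
    have h: "sin t * sin t = 1 - cos t * cos t" using sin_cos_squared_add[of t] by (simp add: power2_eq_square)
    show ?thesis by (simp add: h algebra_simps)
  qed
  fix i j assume ij: "i < dim_row (locop t M * chan_cov NB \<eta> X * (locop t M)\<^sup>T)" "j < dim_col (locop t M * chan_cov NB \<eta> X * (locop t M)\<^sup>T)"
  then have ij': "i < 4" "j < 4" using assms by auto
  then have "i = 0 \<or> i = Suc 0 \<or> i = 2 \<or> i = 3" "j = 0 \<or> j = Suc 0 \<or> j = 2 \<or> j = 3" by auto
  then show "chan_cov NB \<eta> (locop t M * X * (locop t M)\<^sup>T) $$ (i, j) = (locop t M * chan_cov NB \<eta> X * (locop t M)\<^sup>T) $$ (i, j)"
    unfolding chan_cov_idx[OF ij'] locop_entry[OF assms(1) assms(2) ij'] locop_entry[OF assms(1) chan_cov_carrier ij'] sum2'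
    by (elim disjE) (simp_all add: lb_def kk_def chan_cov_idx algebra_simps sc)
qed (use assms in auto)


lemma unit_angle: fixes x y :: real assumes "x\<^sup>2 + y\<^sup>2 = 1" shows "\<exists>t. x = cos t \<and> y = sin t"
  using sincos_total_2pi[OF assms] by blast

lemma unit_div: fixes x y n :: real assumes "n > 0" "n\<^sup>2 = x\<^sup>2 + y\<^sup>2" shows "(x / n)\<^sup>2 + (y / n)\<^sup>2 = 1"
proof -
  have "(x / n)\<^sup>2 + (y / n)\<^sup>2 = (x\<^sup>2 + y\<^sup>2) / n\<^sup>2" by (simp add: power_divide add_divide_distrib)
  also have "\<dots> = n\<^sup>2 / n\<^sup>2" using assms(2) by simp
  also have "\<dots> = 1" using assms(1) by simp
  finally show ?thesis .
qed

lemma diag_exists: fixes P Q W :: real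
  shows "\<exists>t. cos t * sin t * (P - Q) + W * ((cos t)\<^sup>2 - (sin t)\<^sup>2) = 0"
proof (cases "(P - Q)\<^sup>2 + 4 * W\<^sup>2 = 0")
  case True
  then have "P - Q = 0" "W = 0" by (auto simp: add_nonneg_eq_0_iff)
  then show ?thesis by simp
next
  case False
  define n where "n = sqrt ((P - Q)\<^sup>2 + 4 * W\<^sup>2)"
  have "0 \<le> (P - Q)\<^sup>2 + 4 * W\<^sup>2" by (intro add_nonneg_nonneg) simp_all
  then have Spos: "0 < (P - Q)\<^sup>2 + 4 * W\<^sup>2" using False by linarith
  then have npos: "n > 0" unfolding n_def by simp
  have n2: "n\<^sup>2 = (P - Q)\<^sup>2 + 4 * W\<^sup>2" unfolding n_def by (simp add: add_nonneg_nonneg)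
  have "((P - Q) / n)\<^sup>2 + (- 2 * W / n)\<^sup>2 = 1"
    using npos n2 by (intro unit_div) (simp_all add: power_mult_distrib)
  then obtain a where a: "(P - Q) / n = cos a" "- 2 * W / n = sin a" using unit_angle by blast
  define t where "t = a / 2"
  have ca: "cos a = (cos t)\<^sup>2 - (sin t)\<^sup>2" using cos_double[of t] by (simp add: t_def)
  have sa: "sin a = 2 * sin t * cos t" using sin_double[of t] by (simp add: t_def)
  have "cos t * sin t * (P - Q) + W * ((cos t)\<^sup>2 - (sin t)\<^sup>2) = (sin a / 2) * (P - Q) + W * cos a"
    using ca sa by simp
  also have "\<dots> = 0"
  proof -
    have pq: "P - Q = n * cos a" using a(1) npos by (simp add: field_simps)
    have sn: "sin a * n = - 2 * W" using a(2) npos by (simp add: field_simps)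
    have "(sin a / 2) * (P - Q) = (sin a * n) * cos a / 2" using pq by simp
    also have "\<dots> = - W * cos a" using sn by simp
    finally show ?thesis by simp
  qed
  finally show ?thesis by blast
qed

lemma polar2: fixes y00 y01 y10 y11 :: real assumes o: "y00 * y01 + y10 * y11 = 0"
  shows "\<exists>\<phi> cp cm. y00 = cos \<phi> * cp \<and> y10 = sin \<phi> * cp \<and> y01 = - sin \<phi> * cm \<and> y11 = cos \<phi> * cm"
proof (cases "y00\<^sup>2 + y10\<^sup>2 = 0")
  case False
  define n where "n = sqrt (y00\<^sup>2 + y10\<^sup>2)"
  have "0 \<le> y00\<^sup>2 + y10\<^sup>2" by (intro add_nonneg_nonneg) simp_all
  then have Spos: "0 < y00\<^sup>2 + y10\<^sup>2" using False by linarith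
  then have npos: "n > 0" unfolding n_def by simp
  have n2: "n\<^sup>2 = y00\<^sup>2 + y10\<^sup>2" unfolding n_def by (simp add: add_nonneg_nonneg)
  have "(y00 / n)\<^sup>2 + (y10 / n)\<^sup>2 = 1"
    using npos n2 by (intro unit_div)
  then obtain f where f: "y00 / n = cos f" "y10 / n = sin f" using unit_angle by blast
  have e0: "y00 = cos f * n" "y10 = sin f * n" using f npos by (auto simp: field_simps)
  have or: "cos f * y01 + sin f * y11 = 0"
  proof -
    have "n * (cos f * y01 + sin f * y11) = 0" using o e0 by (simp add: algebra_simps)
    then show ?thesis using npos by simp
  qed
  have or1: "sin f * y11 = - (cos f * y01)" using or by linarith
  have or2: "cos f * y01 = - (sin f * y11)" using or by linarith
  have hsc: "sin f * sin f = 1 - cos f * cos f" using sin_cos_squared_add[of f] by (simp add: power2_eq_square)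
  define cm where "cm = - sin f * y01 + cos f * y11"
  have "- sin f * cm = (sin f)\<^sup>2 * y01 - cos f * (sin f * y11)" unfolding cm_def by (simp add: algebra_simps power2_eq_square)
  also have "\<dots> = y01" unfolding or1 by (simp add: hsc algebra_simps power2_eq_square)
  finally have c1: "y01 = - sin f * cm" by simp
  have "cos f * cm = - sin f * (cos f * y01) + (cos f)\<^sup>2 * y11" unfolding cm_def by (simp add: algebra_simps power2_eq_square)
  also have "\<dots> = y11" unfolding or2 by (simp add: hsc algebra_simps power2_eq_square)
  finally have c2: "y11 = cos f * cm" by simp
  show ?thesis using e0 c1 c2 by blast
next
  case True
  then have z: "y00 = 0" "y10 = 0" by (auto simp: add_nonneg_eq_0_iff)
  show ?thesis
  proof (cases "y01\<^sup>2 + y11\<^sup>2 = 0")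
    case True
    then have "y01 = 0" "y11 = 0" by (auto simp: add_nonneg_eq_0_iff)
    then show ?thesis using z by (intro exI[of _ 0]) auto
  next
    case False
    define n where "n = sqrt (y01\<^sup>2 + y11\<^sup>2)"
    have "0 \<le> y01\<^sup>2 + y11\<^sup>2" by (intro add_nonneg_nonneg) simp_all
  then have Spos: "0 < y01\<^sup>2 + y11\<^sup>2" using False by linarith
  then have npos: "n > 0" unfolding n_def by simp
    have n2: "n\<^sup>2 = y01\<^sup>2 + y11\<^sup>2" unfolding n_def by (simp add: add_nonneg_nonneg)
    have "(y11 / n)\<^sup>2 + (- y01 / n)\<^sup>2 = 1"
      using npos n2 by (intro unit_div) simp_all
    then obtain f where f: "y11 / n = cos f" "- y01 / n = sin f" using unit_angle by blast
    have "y11 = cos f * n" "y01 = - sin f * n" using f npos by (auto simp: field_simps)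
    then show ?thesis using z by (intro exI[of _ f] exI[of _ 0] exI[of _ n]) auto
  qed
qed


lemma m2_idx: "mat_of_rows_list 2 [[a, b], [c, d]] $$ (0,0) = (a::real)" "mat_of_rows_list 2 [[a, b], [c, d]] $$ (0,Suc 0) = b"
  "mat_of_rows_list 2 [[a, b], [c, d]] $$ (Suc 0,0) = c" "mat_of_rows_list 2 [[a, b], [c, d]] $$ (Suc 0,Suc 0) = d"
  "mat_of_rows_list 2 [[a, b], [c, d]] \<in> carrier_mat 2 2"
  unfolding mat_of_rows_list_def carrier_mat_def by simp_all
lemma sqzm_idx: "sqzm r $$ (0,0) = r" "sqzm r $$ (0,Suc 0) = 0" "sqzm r $$ (Suc 0,0) = 0" "sqzm r $$ (Suc 0,Suc 0) = inverse r"
  "sqzm r \<in> carrier_mat 2 2" "dim_row (sqzm r) = 2" "dim_col (sqzm r) = 2"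
  unfolding sqzm_def by (simp_all only: m2_idx) (simp_all add: mat_of_rows_list_def)
lemma diag2_idx: "diag2 x y $$ (0,0) = x" "diag2 x y $$ (0,Suc 0) = 0" "diag2 x y $$ (Suc 0,0) = 0" "diag2 x y $$ (Suc 0,Suc 0) = y"
  "diag2 x y \<in> carrier_mat 2 2" "dim_row (diag2 x y) = 2" "dim_col (diag2 x y) = 2"
  unfolding diag2_def by (simp_all only: m2_idx) (simp_all add: mat_of_rows_list_def)
lemma mult2': assumes "A \<in> carrier_mat 2 2" "B \<in> carrier_mat 2 2"
  shows "(A * B) $$ (0,0) = A$$(0,0)*B$$(0,0) + A$$(0,Suc 0)*B$$(Suc 0,0)"
    "(A * B) $$ (0,Suc 0) = A$$(0,0)*B$$(0,Suc 0) + A$$(0,Suc 0)*B$$(Suc 0,Suc 0)"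
    "(A * B) $$ (Suc 0,0) = A$$(Suc 0,0)*B$$(0,0) + A$$(Suc 0,Suc 0)*B$$(Suc 0,0)"
    "(A * B) $$ (Suc 0,Suc 0) = A$$(Suc 0,0)*B$$(0,Suc 0) + A$$(Suc 0,Suc 0)*B$$(Suc 0,Suc 0)"
  using assms by (simp_all add: scalar_prod_def sum2)

lemma cong_comp: fixes A B X :: "real mat" assumes "A \<in> carrier_mat 4 4" "B \<in> carrier_mat 4 4" "X \<in> carrier_mat 4 4"
  shows "(A * B) * X * (A * B)\<^sup>T = A * (B * X * B\<^sup>T) * A\<^sup>T"
proof -
  have At: "A\<^sup>T \<in> carrier_mat 4 4" and Bt: "B\<^sup>T \<in> carrier_mat 4 4" using assms by auto
  have BX: "B * X \<in> carrier_mat 4 4" using assms by auto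
  have BXB: "B * X * B\<^sup>T \<in> carrier_mat 4 4" using assms by auto
  have BtAt: "B\<^sup>T * A\<^sup>T \<in> carrier_mat 4 4" using At Bt by auto
  have "(A * B) * X * (A * B)\<^sup>T = (A * B) * X * (B\<^sup>T * A\<^sup>T)"
    by (simp add: transpose_mult[OF assms(1,2)])
  also have "\<dots> = A * (B * X) * (B\<^sup>T * A\<^sup>T)" by (simp add: assoc_mult_mat[OF assms(1,2,3)])
  also have "\<dots> = A * ((B * X) * (B\<^sup>T * A\<^sup>T))" by (rule assoc_mult_mat[OF assms(1) BX BtAt])
  also have "(B * X) * (B\<^sup>T * A\<^sup>T) = (B * X * B\<^sup>T) * A\<^sup>T" by (rule assoc_mult_mat[OF BX Bt At, symmetric])
  also have "A * (B * X * B\<^sup>T * A\<^sup>T) = A * (B * X * B\<^sup>T) * A\<^sup>T" by (rule assoc_mult_mat[OF assms(1) BXB At, symmetric])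
  finally show ?thesis .
qed

lemma locop_comp: fixes M0 :: "real mat" assumes "M0 \<in> carrier_mat 2 2"
  shows "locop t (rotm s * M0) = locop 0 (rotm s) * locop t M0"
proof (rule eq_matI)
  have c: "rotm s * M0 \<in> carrier_mat 2 2" using mult_carrier_mat[OF rotm_carrier assms] .
  fix i j assume ij: "i < dim_row (locop 0 (rotm s) * locop t M0)" "j < dim_col (locop 0 (rotm s) * locop t M0)"
  then have ij': "i < 4" "j < 4" using assms by auto
  then have "i = 0 \<or> i = Suc 0 \<or> i = 2 \<or> i = 3" "j = 0 \<or> j = Suc 0 \<or> j = 2 \<or> j = 3" by auto
  then show "locop t (rotm s * M0) $$ (i, j) = (locop 0 (rotm s) * locop t M0) $$ (i, j)"
    unfolding mult4[OF locop_carrier[OF rotm_carrier] locop_carrier[OF assms] ij']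
    by (elim disjE) (simp_all add: locop_idx[OF assms] locop_idx[OF rotm_carrier] locop_idx[OF c] mult2'[OF rotm_carrier assms])
qed (use assms in auto)

lemma canon_cov_idx:
  "canon_cov a r f cp cm b $$ (0,0) = a * r" "canon_cov a r f cp cm b $$ (0,Suc 0) = 0"
  "canon_cov a r f cp cm b $$ (Suc 0,0) = 0" "canon_cov a r f cp cm b $$ (Suc 0,Suc 0) = a * inverse r"
  "canon_cov a r f cp cm b $$ (0,2) = cos f * cp" "canon_cov a r f cp cm b $$ (0,3) = - sin f * cm"
  "canon_cov a r f cp cm b $$ (Suc 0,2) = sin f * cp" "canon_cov a r f cp cm b $$ (Suc 0,3) = cos f * cm"
  "canon_cov a r f cp cm b $$ (2,0) = cos f * cp" "canon_cov a r f cp cm b $$ (3,0) = - sin f * cm"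
  "canon_cov a r f cp cm b $$ (2,Suc 0) = sin f * cp" "canon_cov a r f cp cm b $$ (3,Suc 0) = cos f * cm"
  "canon_cov a r f cp cm b $$ (2,2) = b" "canon_cov a r f cp cm b $$ (2,3) = 0"
  "canon_cov a r f cp cm b $$ (3,2) = 0" "canon_cov a r f cp cm b $$ (3,3) = b"
  "dim_row (canon_cov a r f cp cm b) = 4" "dim_col (canon_cov a r f cp cm b) = 4"
  unfolding canon_cov_def
  by (simp_all add: sqzm_idx diag2_idx mult2'[OF rotm_carrier diag2_idx(5)])

lemma idler_alg: fixes p q r :: real
  assumes p: "p > 0" and D: "p * r - q\<^sup>2 \<ge> 1/4"
  defines "\<nu> \<equiv> sqrt (p * r - q\<^sup>2)"
  defines "\<alpha> \<equiv> sqrt (\<nu> / p)"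
  defines "\<gamma> \<equiv> 1 / \<alpha>"
  defines "\<beta> \<equiv> - \<gamma> * q / p"
  shows "\<nu> > 0" "\<alpha> > 0" "\<alpha> * \<gamma> = 1" "\<alpha> * \<alpha> * p = \<nu>" "\<alpha> * \<beta> * p + \<alpha> * \<gamma> * q = 0"
    "\<beta> * \<beta> * p + 2 * \<beta> * \<gamma> * q + \<gamma> * \<gamma> * r = \<nu>"
proof -
  have Dp: "p * r - q\<^sup>2 > 0" using D by linarith
  show nu: "\<nu> > 0" unfolding \<nu>_def using Dp by simp
  have nu2: "\<nu> * \<nu> = p * r - q\<^sup>2" unfolding \<nu>_def using Dp by simp
  show al: "\<alpha> > 0" unfolding \<alpha>_def using nu p by simp
  have al2: "\<alpha> * \<alpha> = \<nu> / p" unfolding \<alpha>_def using nu p by simp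
  show ag: "\<alpha> * \<gamma> = 1" unfolding \<gamma>_def using al by simp
  show "\<alpha> * \<alpha> * p = \<nu>" using al2 p by simp
  show "\<alpha> * \<beta> * p + \<alpha> * \<gamma> * q = 0" unfolding \<beta>_def using ag p by (simp add: field_simps)
  have g2: "\<gamma> * \<gamma> = p / \<nu>" unfolding \<gamma>_def using al2 by (simp add: field_simps)
  have "\<beta> * \<beta> * p + 2 * \<beta> * \<gamma> * q + \<gamma> * \<gamma> * r = \<gamma> * \<gamma> * ((p * r - q\<^sup>2) / p)"
    unfolding \<beta>_def using p by (simp add: field_simps power2_eq_square)
  also have "\<dots> = \<nu>" unfolding g2 nu2[symmetric] using p nu by (simp add: field_simps)
  finally show "\<beta> * \<beta> * p + 2 * \<beta> * \<gamma> * q + \<gamma> * \<gamma> * r = \<nu>" .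
qed

theorem lemma7:
  fixes d :: "real vec" and \<Sigma> :: "real mat"
  assumes "d \<in> carrier_vec 4" and "\<Sigma> \<in> carrier_mat 4 4" and "\<Sigma>\<^sup>T = \<Sigma>"
    and "heisenberg \<Sigma>"
  shows "\<exists>\<theta> M w1 w2 q p a r \<phi> cp cm b.
     symplectic2 M \<and>
     locop \<theta> M *\<^sub>v d + idler_disp w1 w2 = canon_d q p \<and>
     locop \<theta> M * \<Sigma> * (locop \<theta> M)\<^sup>T = canon_cov a r \<phi> cp cm b \<and>
     r > 0 \<and> heisenberg (canon_cov a r \<phi> cp cm b) \<and>
     (\<forall>NB \<eta> d' \<Sigma>'. d' \<in> carrier_vec 4 \<longrightarrow> \<Sigma>' \<in> carrier_mat 4 4 \<longrightarrow>
        chan_d \<eta> (locop \<theta> M *\<^sub>v d' + idler_disp w1 w2)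
          = locop \<theta> M *\<^sub>v chan_d \<eta> d' + idler_disp w1 w2 \<and>
        chan_cov NB \<eta> (locop \<theta> M * \<Sigma>' * (locop \<theta> M)\<^sup>T)
          = locop \<theta> M * chan_cov NB \<eta> \<Sigma>' * (locop \<theta> M)\<^sup>T)"
proof -
  note dC = assms(1) and SC = assms(2) and Ssym = assms(3) and Sh = assms(4)
  have xs: "\<Sigma> $$ (l,k) = \<Sigma> $$ (k,l)" if "k < 4" "l < 4" for k l
    using arg_cong[OF Ssym, of "\<lambda>A. A $$ (k,l)"] that SC by auto
  have x10: "\<Sigma> $$ (Suc 0, 0) = \<Sigma> $$ (0, Suc 0)" and x32: "\<Sigma> $$ (3, 2) = \<Sigma> $$ (2, 3)" using xs by auto
  have hI: "\<Sigma> $$ (2,2) > 0 \<and> \<Sigma> $$ (3,3) > 0 \<and> \<Sigma> $$ (2,2) * \<Sigma> $$ (3,3) - (\<Sigma> $$ (2,3))\<^sup>2 \<ge> 1/4"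
    by (rule heis_blocks(2)[OF SC Ssym Sh])
  define \<nu> where "\<nu> = sqrt (\<Sigma> $$ (2,2) * \<Sigma> $$ (3,3) - (\<Sigma> $$ (2,3))\<^sup>2)"
  define \<alpha> where "\<alpha> = sqrt (\<nu> / \<Sigma> $$ (2,2))"
  define \<gamma> where "\<gamma> = 1 / \<alpha>"
  define \<beta> where "\<beta> = - \<gamma> * \<Sigma> $$ (2,3) / \<Sigma> $$ (2,2)"
  note ia = idler_alg[of "\<Sigma> $$ (2,2)" "\<Sigma> $$ (3,3)" "\<Sigma> $$ (2,3)", folded \<nu>_def, folded \<alpha>_def, folded \<gamma>_def, folded \<beta>_def]
  have nupos: "\<nu> > 0" and ag: "\<alpha> * \<gamma> = 1" and i1: "\<alpha> * \<alpha> * \<Sigma> $$ (2,2) = \<nu>"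
    and i2: "\<alpha> * \<beta> * \<Sigma> $$ (2,2) + \<alpha> * \<gamma> * \<Sigma> $$ (2,3) = 0"
    and i3: "\<beta> * \<beta> * \<Sigma> $$ (2,2) + 2 * \<beta> * \<gamma> * \<Sigma> $$ (2,3) + \<gamma> * \<gamma> * \<Sigma> $$ (3,3) = \<nu>"
    using ia hI by auto
  define M0 where "M0 = mat_of_rows_list 2 [[\<alpha>, 0], [\<beta>, \<gamma>]]"
  have M0C: "M0 \<in> carrier_mat 2 2" unfolding M0_def by (rule m2_idx)
  have M0i: "M0 $$ (0,0) = \<alpha>" "M0 $$ (0,Suc 0) = 0" "M0 $$ (Suc 0,0) = \<beta>" "M0 $$ (Suc 0,Suc 0) = \<gamma>"
    unfolding M0_def by (rule m2_idx)+
  have M0det: "M0 $$ (0,0) * M0 $$ (1,1) - M0 $$ (0,1) * M0 $$ (1,0) = 1" using M0i ag by simp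
  obtain \<theta> where th: "cos \<theta> * sin \<theta> * (\<Sigma> $$ (0,0) - \<Sigma> $$ (Suc 0, Suc 0)) + \<Sigma> $$ (0, Suc 0) * ((cos \<theta>)\<^sup>2 - (sin \<theta>)\<^sup>2) = 0"
    using diag_exists by blast
  define L1 where "L1 = locop \<theta> M0"
  define S1 where "S1 = L1 * \<Sigma> * L1\<^sup>T"
  have L1C: "L1 \<in> carrier_mat 4 4" unfolding L1_def using M0C by simp
  have S1C: "S1 \<in> carrier_mat 4 4" unfolding S1_def using L1C SC by auto
  have S1sym: "S1\<^sup>T = S1" unfolding S1_def by (rule cong_sym[OF L1C SC Ssym])
  have S1h: "heisenberg S1" unfolding S1_def L1_def
    by (rule heis_pres[OF locop_carrier[OF M0C] SC locop_omega[OF M0C M0det] Sh])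
  have S1e: "S1 $$ (i,j) = (\<Sum>k<2. \<Sum>l<2. lb \<theta> M0 i k * \<Sigma> $$ (kk i k, kk j l) * lb \<theta> M0 j l)" if "i < 4" "j < 4" for i j
    unfolding S1_def L1_def by (rule locop_entry[OF M0C SC that])
  have S1_01: "S1 $$ (0, Suc 0) = 0"
    using th by (simp add: S1e sum2' lb_def kk_def x10 algebra_simps power2_eq_square)
  have S1_22: "S1 $$ (2,2) = \<nu>"
    using i1 by (simp add: S1e sum2' lb_def kk_def M0i algebra_simps)
  have S1_23: "S1 $$ (2,3) = 0"
    using i2 by (simp add: S1e sum2' lb_def kk_def M0i algebra_simps)
  have S1_33: "S1 $$ (3,3) = \<nu>"
    using i3 by (simp add: S1e sum2' lb_def kk_def M0i x32 algebra_simps)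
  have S1s: "S1 $$ (l,k) = S1 $$ (k,l)" if "k < 4" "l < 4" for k l
    using arg_cong[OF S1sym, of "\<lambda>A. A $$ (k,l)"] that S1C by auto
  define P where "P = (S1 $$ (0,2))\<^sup>2 + (S1 $$ (Suc 0,2))\<^sup>2"
  define Q where "Q = (S1 $$ (0,3))\<^sup>2 + (S1 $$ (Suc 0,3))\<^sup>2"
  define W where "W = S1 $$ (0,2) * S1 $$ (0,3) + S1 $$ (Suc 0,2) * S1 $$ (Suc 0,3)"
  obtain \<psi> where ps: "cos \<psi> * sin \<psi> * (P - Q) + W * ((cos \<psi>)\<^sup>2 - (sin \<psi>)\<^sup>2) = 0"
    using diag_exists by blast
  define L2 where "L2 = locop 0 (rotm \<psi>)"
  define S2 where "S2 = L2 * S1 * L2\<^sup>T"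
  have L2C: "L2 \<in> carrier_mat 4 4" unfolding L2_def by simp
  have S2C: "S2 \<in> carrier_mat 4 4" unfolding S2_def using L2C S1C by auto
  have S2sym: "S2\<^sup>T = S2" unfolding S2_def by (rule cong_sym[OF L2C S1C S1sym])
  have rdet: "rotm \<psi> $$ (0,0) * rotm \<psi> $$ (1,1) - rotm \<psi> $$ (0,1) * rotm \<psi> $$ (1,0) = 1"
    using sin_cos_squared_add[of \<psi>] by (simp add: power2_eq_square)
  have S2h: "heisenberg S2" unfolding S2_def L2_def
    by (rule heis_pres[OF locop_carrier[OF rotm_carrier] S1C locop_omega[OF rotm_carrier rdet] S1h])
  have S2e: "S2 $$ (i,j) = (\<Sum>k<2. \<Sum>l<2. lb 0 (rotm \<psi>) i k * S1 $$ (kk i k, kk j l) * lb 0 (rotm \<psi>) j l)" if "i < 4" "j < 4" for i j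
    unfolding S2_def L2_def by (rule locop_entry[OF rotm_carrier S1C that])
  have S1_32: "S1 $$ (3,2) = 0" using S1s[of 2 3] S1_23 by simp
  have hsc: "sin \<psi> * sin \<psi> = 1 - cos \<psi> * cos \<psi>" using sin_cos_squared_add[of \<psi>] by (simp add: power2_eq_square)
  have S2_00: "S2 $$ (0,0) = S1 $$ (0,0)" by (simp add: S2e sum2' lb_def kk_def)
  have S2_01: "S2 $$ (0,Suc 0) = 0" by (simp add: S2e sum2' lb_def kk_def S1_01)
  have S2_11: "S2 $$ (Suc 0,Suc 0) = S1 $$ (Suc 0,Suc 0)" by (simp add: S2e sum2' lb_def kk_def)
  have S2_22: "S2 $$ (2,2) = \<nu>" by (simp add: S2e sum2' lb_def kk_def S1_22 S1_23 S1_32 S1_33 hsc algebra_simps)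
  have S2_23: "S2 $$ (2,3) = 0" by (simp add: S2e sum2' lb_def kk_def S1_22 S1_23 S1_32 S1_33 hsc algebra_simps)
  have S2_33: "S2 $$ (3,3) = \<nu>" by (simp add: S2e sum2' lb_def kk_def S1_22 S1_23 S1_32 S1_33 hsc algebra_simps)
  have S2_02: "S2 $$ (0,2) = S1 $$ (0,2) * cos \<psi> - S1 $$ (0,3) * sin \<psi>" by (simp add: S2e sum2' lb_def kk_def algebra_simps)
  have S2_03: "S2 $$ (0,3) = S1 $$ (0,2) * sin \<psi> + S1 $$ (0,3) * cos \<psi>" by (simp add: S2e sum2' lb_def kk_def algebra_simps)
  have S2_12: "S2 $$ (Suc 0,2) = S1 $$ (Suc 0,2) * cos \<psi> - S1 $$ (Suc 0,3) * sin \<psi>" by (simp add: S2e sum2' lb_def kk_def algebra_simps)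
  have S2_13: "S2 $$ (Suc 0,3) = S1 $$ (Suc 0,2) * sin \<psi> + S1 $$ (Suc 0,3) * cos \<psi>" by (simp add: S2e sum2' lb_def kk_def algebra_simps)
  have orth: "S2 $$ (0,2) * S2 $$ (0,3) + S2 $$ (Suc 0,2) * S2 $$ (Suc 0,3) = 0"
    using ps unfolding S2_02 S2_03 S2_12 S2_13 P_def Q_def W_def by (simp add: algebra_simps power2_eq_square)
  obtain \<phi> cp cm where pc: "S2 $$ (0,2) = cos \<phi> * cp" "S2 $$ (Suc 0,2) = sin \<phi> * cp"
     "S2 $$ (0,3) = - sin \<phi> * cm" "S2 $$ (Suc 0,3) = cos \<phi> * cm"
    using polar2[OF orth] by blast
  have hS: "S2 $$ (0,0) > 0 \<and> S2 $$ (1,1) > 0 \<and> S2 $$ (0,0) * S2 $$ (1,1) - (S2 $$ (0,1))\<^sup>2 \<ge> 1/4"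
    by (rule heis_blocks(1)[OF S2C S2sym S2h])
  define l1 where "l1 = S2 $$ (0,0)"
  define l2 where "l2 = S2 $$ (Suc 0,Suc 0)"
  have l1p: "l1 > 0" and l2p: "l2 > 0" using hS unfolding l1_def l2_def by auto
  define a where "a = sqrt (l1 * l2)"
  define r where "r = sqrt (l1 / l2)"
  have rpos: "r > 0" unfolding r_def using l1p l2p by simp
  have ar: "a * r = l1"
  proof -
    have e: "l1 * l2 * (l1 / l2) = l1\<^sup>2" using l2p by (simp add: power2_eq_square)
    have "a * r = sqrt (l1 * l2 * (l1 / l2))" unfolding a_def r_def by (simp only: real_sqrt_mult)
    also have "\<dots> = sqrt (l1\<^sup>2)" by (simp only: e)
    also have "\<dots> = l1" using l1p by simp
    finally show ?thesis .
  qed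
  have ari: "a * inverse r = l2"
  proof -
    have e: "l1 * l2 * (l2 / l1) = l2\<^sup>2" using l1p by (simp add: power2_eq_square)
    have "inverse r = sqrt (l2 / l1)" unfolding r_def by (simp add: real_sqrt_inverse[symmetric])
    then have "a * inverse r = sqrt (l1 * l2 * (l2 / l1))" unfolding a_def by (simp only: real_sqrt_mult)
    also have "\<dots> = sqrt (l2\<^sup>2)" by (simp only: e)
    also have "\<dots> = l2" using l2p by simp
    finally show ?thesis .
  qed
  have S2s: "S2 $$ (l,k) = S2 $$ (k,l)" if "k < 4" "l < 4" for k l
    using arg_cong[OF S2sym, of "\<lambda>A. A $$ (k,l)"] that S2C by auto
  define M where "M = rotm \<psi> * M0"
  have MC: "M \<in> carrier_mat 2 2" unfolding M_def using mult_carrier_mat[OF rotm_carrier M0C] .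
  have Lc: "locop \<theta> M = L2 * L1" unfolding M_def L2_def L1_def by (rule locop_comp[OF M0C])
  have LS: "locop \<theta> M * \<Sigma> * (locop \<theta> M)\<^sup>T = S2"
    unfolding Lc S2_def S1_def by (rule cong_comp[OF L2C L1C SC])
  have canon: "S2 = canon_cov a r \<phi> cp cm \<nu>"
  proof (rule eq_matI)
    fix i j assume ij: "i < dim_row (canon_cov a r \<phi> cp cm \<nu>)" "j < dim_col (canon_cov a r \<phi> cp cm \<nu>)"
    then have "i = 0 \<or> i = Suc 0 \<or> i = 2 \<or> i = 3" "j = 0 \<or> j = Suc 0 \<or> j = 2 \<or> j = 3" by (auto simp: canon_cov_idx)
    then show "S2 $$ (i, j) = canon_cov a r \<phi> cp cm \<nu> $$ (i, j)"
      using S2s[of 0 1] S2s[of 0 2] S2s[of 0 3] S2s[of 1 2] S2s[of 1 3] S2s[of 2 3]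
      by (elim disjE) (simp_all add: canon_cov_idx S2_01 S2_22 S2_23 S2_33 pc ar ari l1_def[symmetric] l2_def[symmetric])
  qed (use S2C in \<open>auto simp: canon_cov_idx\<close>)
  have Mdet: "M $$ (0,0) * M $$ (1,1) - M $$ (0,1) * M $$ (1,0) = 1"
  proof -
    have "M $$ (0,0) * M $$ (Suc 0,Suc 0) - M $$ (0,Suc 0) * M $$ (Suc 0,0) = \<alpha> * \<gamma>"
      unfolding M_def mult2'[OF rotm_carrier M0C] M0i by (simp add: hsc algebra_simps)
    then show ?thesis using ag by simp
  qed
  have Msymp: "symplectic2 M" by (rule symp_of_det[OF MC Mdet])
  define L where "L = locop \<theta> M"
  have LC: "L \<in> carrier_mat 4 4" unfolding L_def using MC by simp
  define q where "q = (L *\<^sub>v d) $ 0"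
  define p where "p = (L *\<^sub>v d) $ Suc 0"
  define w1 where "w1 = - (L *\<^sub>v d) $ 2"
  define w2 where "w2 = - (L *\<^sub>v d) $ 3"
  have dv: "L *\<^sub>v d + idler_disp w1 w2 = canon_d q p"
  proof (rule eq_vecI)
    fix i assume "i < dim_vec (canon_d q p)"
    then have "i = 0 \<or> i = Suc 0 \<or> i = 2 \<or> i = 3" by (auto simp: canon_d_idx)
    then show "(L *\<^sub>v d + idler_disp w1 w2) $ i = canon_d q p $ i"
      by (elim disjE) (simp_all add: idler_disp_idx canon_d_idx q_def p_def w1_def w2_def)
  qed (simp add: idler_disp_idx canon_d_idx)
  show ?thesis
  proof (intro exI conjI allI impI)
    show "symplectic2 M" by (rule Msymp)
    show "locop \<theta> M *\<^sub>v d + idler_disp w1 w2 = canon_d q p" using dv unfolding L_def .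
    show "locop \<theta> M * \<Sigma> * (locop \<theta> M)\<^sup>T = canon_cov a r \<phi> cp cm \<nu>" using LS canon by simp
    show "r > 0" by (rule rpos)
    show "heisenberg (canon_cov a r \<phi> cp cm \<nu>)" using S2h canon by simp
    fix NB \<eta> :: real and d' :: "real vec" and \<Sigma>' :: "real mat" assume d'C: "d' \<in> carrier_vec 4" and S'C: "\<Sigma>' \<in> carrier_mat 4 4"
    show "chan_d \<eta> (locop \<theta> M *\<^sub>v d' + idler_disp w1 w2) = locop \<theta> M *\<^sub>v chan_d \<eta> d' + idler_disp w1 w2"
      by (rule chan_d_comm[OF MC d'C])
    show "chan_cov NB \<eta> (locop \<theta> M * \<Sigma>' * (locop \<theta> M)\<^sup>T) = locop \<theta> M * chan_cov NB \<eta> \<Sigma>' * (locop \<theta> M)\<^sup>T"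
      by (rule chan_cov_comm[OF MC S'C])
  qed
qed
end
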